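(* Let $k\ge 2$ be an integer. The class of finite simple graphs admitting a closed neighborhood balanced $k$-coloring is not hereditary; that is, there exist a graph $H$ admitting a closed neighborhood balanced $k$-coloring and an induced subgraph of $H$ that admits no closed neighborhood balanced $k$-coloring.
   Context: For a vertex $v$ of a graph $G$, $N[v]=\{v\}\cup\{u : uv\in E(G)\}$ is its closed neighborhood. For an integer $k\ge 2$, a closed neighborhood balanced $k$-coloring of $G$ is a map $c: V(G)\to\{1,2,\dots,k\}$ such that for every vertex $v$ the numbers $|\{u\in N[v] : c(u)=i\}|$, $i=1,\dots,k$, are all equal. A class of graphs is hereditary if it is closed under taking induced subgraphs. *)

theory Defs
  imports Main
begin

definition simple_graph :: "'a set \<Rightarrow> ('a \<Rightarrow> 'a \<Rightarrow> bool) \<Rightarrow> bool" where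
  "simple_graph V E \<longleftrightarrow> finite V
     \<and> (\<forall>u v. E u v \<longrightarrow> u \<in> V \<and> v \<in> V)
     \<and> (\<forall>u v. E u v \<longrightarrow> E v u)
     \<and> (\<forall>v. \<not> E v v)"

definition closed_nbhd :: "'a set \<Rightarrow> ('a \<Rightarrow> 'a \<Rightarrow> bool) \<Rightarrow> 'a \<Rightarrow> 'a set" where
  "closed_nbhd V E v = {v} \<union> {u \<in> V. E u v}"

definition cnb_coloring :: "'a set \<Rightarrow> ('a \<Rightarrow> 'a \<Rightarrow> bool) \<Rightarrow> nat \<Rightarrow> ('a \<Rightarrow> nat) \<Rightarrow> bool" where
  "cnb_coloring V E k c \<longleftrightarrow> (\<forall>v\<in>V. c v \<in> {1..k})
     \<and> (\<forall>v\<in>V. \<forall>i\<in>{1..k}. \<forall>j\<in>{1..k}.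
          card {u \<in> closed_nbhd V E v. c u = i} = card {u \<in> closed_nbhd V E v. c u = j})"

definition has_cnb_coloring :: "'a set \<Rightarrow> ('a \<Rightarrow> 'a \<Rightarrow> bool) \<Rightarrow> nat \<Rightarrow> bool" where
  "has_cnb_coloring V E k \<longleftrightarrow> (\<exists>c. cnb_coloring V E k c)"

definition induced_edges :: "('a \<Rightarrow> 'a \<Rightarrow> bool) \<Rightarrow> 'a set \<Rightarrow> 'a \<Rightarrow> 'a \<Rightarrow> bool" where
  "induced_edges E W = (\<lambda>u v. E u v \<and> u \<in> W \<and> v \<in> W)"

end

theory Submission
  imports Defs
begin

lemma single_no: "\<not> has_cnb_coloring {0::nat} (induced_edges E {0}) k" if "k \<ge> 2" for E k
proof
  assume "has_cnb_coloring {0::nat} (induced_edges E {0}) k"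
  then obtain c where c: "cnb_coloring {0::nat} (induced_edges E {0}) k c"
    unfolding has_cnb_coloring_def by blast
  have nb: "closed_nbhd {0::nat} (induced_edges E {0}) 0 = {0}"
    unfolding closed_nbhd_def by auto
  define j where "j = (if c 0 = 1 then 2 else (1::nat))"
  have i: "c 0 \<in> {1..k}" using c unfolding cnb_coloring_def by auto
  have j: "j \<in> {1..k}" "j \<noteq> c 0" using that unfolding j_def by auto
  have e: "card {u \<in> closed_nbhd {0::nat} (induced_edges E {0}) 0. c u = c 0}
      = card {u \<in> closed_nbhd {0::nat} (induced_edges E {0}) 0. c u = j}"
    using c i j unfolding cnb_coloring_def by blast
  have a: "{u \<in> {0::nat}. c u = c 0} = {0}" by auto
  have b: "{u \<in> {0::nat}. c u = j} = {}" using j by auto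
  have "card ({0::nat}) = card ({}::nat set)" using e unfolding nb a b .
  then show False by simp
qed

theorem corollary2p7:
  fixes k :: nat
  assumes "k \<ge> 2"
  shows "\<exists>(V :: nat set) E W. simple_graph V E \<and> has_cnb_coloring V E k
           \<and> W \<subseteq> V \<and> \<not> has_cnb_coloring W (induced_edges E W) k"
proof (intro exI conjI)
  let ?V = "{0..<k}"
  let ?E = "\<lambda>u v::nat. u \<noteq> v \<and> u < k \<and> v < k"
  show "simple_graph ?V ?E" unfolding simple_graph_def by auto
  have nb: "closed_nbhd ?V ?E v = ?V" if "v \<in> ?V" for v
    using that unfolding closed_nbhd_def by auto
  have cnt: "{u \<in> ?V. Suc u = i} = {i - 1}" if "i \<in> {1..k}" for i
    using that by auto
  have "cnb_coloring ?V ?E k Suc"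
    unfolding cnb_coloring_def using nb cnt by auto
  then show "has_cnb_coloring ?V ?E k" unfolding has_cnb_coloring_def by blast
  show "{0} \<subseteq> ?V" using assms by auto
  show "\<not> has_cnb_coloring {0} (induced_edges ?E {0}) k" using single_no assms by blast
qed

end
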